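(* For all $z\in(0,1/4)$, $\omega_3=3\omega_2/4$.
   Context: Let $d(x)=(zx^2-x+z)^2-4z^2x^2$, whose roots are $x_1=[1+2z-(1+4z)^{1/2}]/(2z)<x_2=[1-2z-(1-4z)^{1/2}]/(2z)<x_3=[1-2z+(1-4z)^{1/2}]/(2z)<x_4=[1+2z+(1+4z)^{1/2}]/(2z)$. Define $\omega_2=\int_{x_2}^{x_3}\frac{dx}{[d(x)]^{1/2}}$ and $\omega_3=\int_{-\infty}^{x_1}\frac{dx}{[d(x)]^{1/2}}$ (positive square roots of positive quantities). *)

theory Defs
  imports "HOL-Analysis.Analysis"
begin

definition dpoly :: "real \<Rightarrow> real \<Rightarrow> real" where
  "dpoly z x = (z * x^2 - x + z)^2 - 4 * z^2 * x^2"

definition root1 :: "real \<Rightarrow> real" where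
  "root1 z = (1 + 2*z - sqrt (1 + 4*z)) / (2*z)"
definition root2 :: "real \<Rightarrow> real" where
  "root2 z = (1 - 2*z - sqrt (1 - 4*z)) / (2*z)"
definition root3 :: "real \<Rightarrow> real" where
  "root3 z = (1 - 2*z + sqrt (1 - 4*z)) / (2*z)"
definition root4 :: "real \<Rightarrow> real" where
  "root4 z = (1 + 2*z + sqrt (1 + 4*z)) / (2*z)"

text \<open>Integrand 1/sqrt(d(x)); both periods are convergent improper integrals of a
nonnegative function, rendered as (Henstock-Kurzweil) integrals over the intervals.\<close>
definition integrand :: "real \<Rightarrow> real \<Rightarrow> real" where
  "integrand z x = 1 / sqrt (dpoly z x)"

definition omega2 :: "real \<Rightarrow> real" where
  "omega2 z = integral {root2 z .. root3 z} (integrand z)"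

definition omega3 :: "real \<Rightarrow> real" where
  "omega3 z = integral {.. root1 z} (integrand z)"

end

theory Submission
  imports Defs
begin

lemma cov:
  fixes g g' f F :: "real \<Rightarrow> real"
  assumes S: "S \<in> sets lebesgue" and der: "\<And>x. x \<in> S \<Longrightarrow> (g has_real_derivative g' x) (at x)"
  and inj: "inj_on g S" and img: "g ` S = T" and eq: "\<And>x. x\<in>S \<Longrightarrow> \<bar>g' x\<bar> * F (g x) = f x"
  shows "(f absolutely_integrable_on S \<and> integral S f = v) \<longleftrightarrow> (F absolutely_integrable_on T \<and> integral T F = v)"
proof -
  have "(\<lambda>x. \<bar>g' x\<bar> * F (g x)) absolutely_integrable_on S \<and> integral S (\<lambda>x. \<bar>g' x\<bar> * F(g x)) = v
     \<longleftrightarrow> F absolutely_integrable_on (g ` S) \<and> integral (g ` S) F = v"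
    by (rule has_absolute_integral_change_of_variables_1'[OF S]) (auto intro: has_field_derivative_at_within der inj)
  moreover have "(\<lambda>x. \<bar>g' x\<bar> * F (g x)) absolutely_integrable_on S \<longleftrightarrow> f absolutely_integrable_on S"
    by (rule absolutely_integrable_spike_eq[of "{}"]) (auto simp: eq)
  moreover have "integral S (\<lambda>x. \<bar>g' x\<bar> * F (g x)) = integral S f"
    by (rule integral_cong) (simp add: eq)
  ultimately show ?thesis using img by simp
qed

lemma spike_fin:
  fixes f :: "real \<Rightarrow> real"
  assumes "f absolutely_integrable_on S" "finite E" "S - E \<subseteq> T" "T - E \<subseteq> S"
  shows "f absolutely_integrable_on T \<and> integral T f = integral S f"
proof -
  have n1: "negligible {x \<in> S - T. f x \<noteq> 0}" 
    by (rule negligible_subset[of E]) (use assms in auto)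
  have n2: "negligible {x \<in> T - S. f x \<noteq> 0}" 
    by (rule negligible_subset[of E]) (use assms in auto)
  show ?thesis using absolutely_integrable_spike_set_eq[OF n1 n2] integral_spike_set[OF n1 n2] assms(1) by simp
qed

lemma union2:
  fixes f :: "real \<Rightarrow> real"
  assumes "f absolutely_integrable_on A" "f absolutely_integrable_on B" "A \<inter> B = {}"
  shows "f absolutely_integrable_on (A \<union> B) \<and> integral (A \<union> B) f = integral A f + integral B f"
  using absolutely_integrable_Un[OF assms(1,2)]
    assms unfolding absolutely_integrable_on_def by simp

lemma "{a<..<b::real} \<in> sets lebesgue" "{..<b::real} \<in> sets lebesgue" "{(a::real)<..} \<in> sets lebesgue" by auto

definition EE :: "real \<Rightarrow> real \<Rightarrow> real \<Rightarrow> real" where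
  "EE z c t = z^2 * (t^2 - 4) * ((t - c)^2 - 4)"
definition FF :: "real \<Rightarrow> real \<Rightarrow> real \<Rightarrow> real" where
  "FF z c t = 1 / sqrt (EE z c t)"
definition mob :: "real \<Rightarrow> real \<Rightarrow> real" where
  "mob c t = (c*t - 8) / (2*t - c)"
definition jac :: "real \<Rightarrow> real \<Rightarrow> real" where
  "jac c t = (16 - c^2) / (2*t - c)^2"

lemma mob_eqs:
  assumes "2*t \<noteq> c"
  shows "mob c t + 2 = (c+4)*(t-2)/(2*t-c)"
    "mob c t - 2 = (c-4)*(t+2)/(2*t-c)"
    "mob c t - c/2 = (c^2-16)/(2*(2*t-c))"
    "mob c t - (c+2) = (c+4)*(c-2-t)/(2*t-c)"
    "mob c t - (c-2) = (c-4)*(c+2-t)/(2*t-c)"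
    "2 * mob c t - c = (c^2-16)/(2*t-c)"
  using assms by (auto simp: mob_def field_simps) (auto simp: algebra_simps power2_eq_square)

lemma mob_invol:
  assumes "2*t \<noteq> c" "c^2 \<noteq> 16"
  shows "mob c (mob c t) = t"
proof -
  have d: "2*t - c \<noteq> 0" using assms by simp
  have "2 * mob c t - c = (c^2-16)/(2*t-c)" using mob_eqs(6)[OF assms(1)] .
  have dd: "c * 16 + c * (c * (t * 2)) - (c * (c * c) + t * 32) \<noteq> 0"
  proof -
    have "c * 16 + c * (c * (t * 2)) - (c * (c * c) + t * 32) = (2*t-c)*(c^2-16)"
      by (simp add: algebra_simps power2_eq_square)
    then show ?thesis using d assms(2) by simp
  qed
  then show ?thesis using d assms(2)
    unfolding mob_def[of c "mob c t"]
    by (simp add: mob_def field_simps)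
qed

lemma mob_deriv:
  assumes "2*t \<noteq> c"
  shows "(mob c has_real_derivative jac c t) (at t)"
  unfolding mob_def jac_def
  using assms
  by (auto intro!: derivative_eq_intros simp: field_simps power2_eq_square)

lemma mob_EE:
  assumes "2*t \<noteq> c"
  shows "EE z c (mob c t) = ((c^2-16)/(2*t-c)^2)^2 * EE z c t"
proof -
  have d: "2*t - c \<noteq> 0" using assms by simp
  have e1: "mob c t ^2 - 4 = (c^2-16)*(t^2-4)/(2*t-c)^2"
    using d by (simp add: mob_def field_simps) (simp add: algebra_simps power2_eq_square)
  have e2: "(mob c t - c)^2 - 4 = (c^2-16)*((t-c)^2-4)/(2*t-c)^2"
    using d by (simp add: mob_def field_simps) (simp add: algebra_simps power2_eq_square)
  show ?thesis unfolding EE_def e1 e2 using d by (simp add: field_simps power2_eq_square)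
qed

lemma mob_FF:
  assumes "2*t \<noteq> c" "c > 4"
  shows "\<bar>jac c t\<bar> * FF z c (mob c t) = FF z c t"
proof -
  define k where "k = (c^2-16)/(2*t-c)^2"
  have c16: "c^2 - 16 > 0"
  proof -
    have "c^2 - 16 = (c-4)*(c+4)" by (simp add: algebra_simps power2_eq_square)
    then show ?thesis using assms(2) by simp
  qed
  have kpos: "k > 0" unfolding k_def using assms c16 by simp
  have "\<bar>jac c t\<bar> = k" unfolding jac_def k_def using assms
    using c16 by (simp add: abs_div)
  moreover have "sqrt (EE z c (mob c t)) = k * sqrt (EE z c t)"
    unfolding mob_EE[OF assms(1)] k_def[symmetric] using kpos by (simp add: real_sqrt_mult)
  ultimately show ?thesis unfolding FF_def using kpos by simp
qed

lemma base:
  assumes z: "(z::real)>0" and c: "c>4"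
  shows "FF z c absolutely_integrable_on {2<..<c/2}"
proof -
  define L where "L = sqrt(c/2-2)"
  have Lpos: "L > 0" and L2: "L^2 = c/2 - 2" using c by (auto simp: L_def)
  define P where "P s = (4+s^2)*(c-s^2)*(c-4-s^2)" for s :: real
  define h :: "real \<Rightarrow> real" where "h = (\<lambda>s. 2/(z* sqrt(P s)))"
  have Ppos: "P s > 0" if "s \<in> {0..L}" for s
  proof -
    have "s^2 \<le> L^2" using that by (intro power_mono) auto
    moreover have "0 \<le> s^2" by simp
    ultimately have "0 < 4+s^2" "0 < c - s^2" "0 < c-4-s^2" using L2 c by linarith+
    then show ?thesis unfolding P_def by simp
  qed
  have Pc: "continuous_on {0..L} P" unfolding P_def by (intro continuous_intros)
  have "continuous_on {0..L} h"
    unfolding h_def using Ppos z by (intro continuous_intros Pc) force+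
  then have "h integrable_on {0..L}" by (rule integrable_continuous_interval)
  then have "h absolutely_integrable_on {0..L}"
    by (rule nonnegative_absolutely_integrable_1) (use Ppos z in \<open>auto simp: h_def intro!: mult_nonneg_nonneg less_imp_le\<close>)
  then have hS: "h absolutely_integrable_on {0<..<L}"
    using spike_fin[where f=h and S="{0..L}" and E="{0,L}" and T="{0<..<L}"] by force
  have img: "(\<lambda>s. 2 + s^2) ` {0<..<L} = {2<..<c/2}"
  proof
    show "(\<lambda>s. 2 + s^2) ` {0<..<L} \<subseteq> {2<..<c/2}"
    proof
      fix t assume "t \<in> (\<lambda>s. 2 + s^2) ` {0<..<L}"
      then obtain s where s: "s \<in> {0<..<L}" "t = 2 + s^2" by auto
      have "s^2 < L^2" using s by (intro power_strict_mono) auto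
      then show "t \<in> {2<..<c/2}" using s L2 by auto
    qed
    show "{2<..<c/2} \<subseteq> (\<lambda>s. 2 + s^2) ` {0<..<L}"
    proof
      fix t assume t: "t \<in> {2<..<c/2}"
      have "sqrt (t-2) \<in> {0<..<L}" using t by (auto simp: L_def)
      moreover have "t = 2 + (sqrt (t-2))^2" using t by simp
      ultimately show "t \<in> (\<lambda>s. 2 + s^2) ` {0<..<L}" by blast
    qed
  qed
  have inj: "inj_on (\<lambda>s. 2 + s^2) {0<..<L}"
    by (auto simp: inj_on_def power2_eq_iff_nonneg)
  have eq: "\<bar>2* s\<bar> * FF z c (2 + s^2) = h s" if s: "s \<in> {0<..<L}" for s
  proof -
    have "EE z c (2 + s^2) = (z* s)^2 * P s"
      unfolding EE_def P_def by (simp add: algebra_simps power2_eq_square)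
    then have "sqrt (EE z c (2 + s^2)) = z* s* sqrt (P s)"
      using s z by (simp add: real_sqrt_mult)
    then show ?thesis using s z unfolding FF_def h_def by simp
  qed
  have der: "((\<lambda>s. 2 + s^2) has_real_derivative 2* s) (at s)" for s :: real
    by (auto intro!: derivative_eq_intros)
  from cov[of "{0<..<L}" "\<lambda>s. 2 + s^2" "\<lambda>s. 2* s" "{2<..<c/2}" "FF z c" h "integral {0<..<L} h", OF _ der inj img eq]
  show ?thesis using hS by auto
qed

lemma mob_img:
  assumes "\<And>t. t\<in>S \<Longrightarrow> 2*t\<noteq>c \<and> mob c t \<in> T" "\<And>u. u\<in>T \<Longrightarrow> 2*u \<noteq> c \<and> mob c u \<in> S" "c^2 \<noteq> 16"
  shows "mob c ` S = T" "inj_on (mob c) S"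
proof -
  show "mob c ` S = T"
  proof
    show "mob c ` S \<subseteq> T" using assms(1) by auto
    show "T \<subseteq> mob c ` S"
    proof
      fix u assume u: "u \<in> T"
      then have "u = mob c (mob c u)" using mob_invol assms(2,3) by auto
      then show "u \<in> mob c ` S" using assms(2)[OF u] by blast
    qed
  qed
  show "inj_on (mob c) S"
  proof (rule inj_onI)
    fix x y assume "x \<in> S" "y \<in> S" "mob c x = mob c y"
    then show "x = y" using mob_invol[of x c] mob_invol[of y c] assms(1,3) by metis
  qed
qed

lemma c16: "c > 4 \<Longrightarrow> c^2 \<noteq> (16::real)" "c > 4 \<Longrightarrow> c^2 - 16 > (0::real)"
proof -
  assume c: "c > 4"
  have "c^2 - 16 = (c-4)*(c+4)" by (simp add: algebra_simps power2_eq_square)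
  then show "c^2 - 16 > (0::real)" using c by simp
  then show "c^2 \<noteq> (16::real)" by simp
qed

lemma tchain:
  assumes z: "(z::real)>0" and c: "c>4"
  shows "FF z c absolutely_integrable_on {2<..<c-2} \<and> integral {2<..<c-2} (FF z c) = 2 * integral {..<-2} (FF z c)"
    "FF z c absolutely_integrable_on {..<-2}"
    "FF z c absolutely_integrable_on {c+2<..} \<and> integral {c+2<..} (FF z c) = integral {..<-2} (FF z c)"
proof -
  note cc = c16[OF c]
  define I where "I = integral {..<-2} (FF z c)"
  have m1: "2*t\<noteq>c \<and> mob c t \<in> {..<-2}" if "t \<in> {2<..<c/2}" for t
  proof -
    have "2*t \<noteq> c" "2*t - c < 0" using that by auto
    then have "mob c t + 2 < 0" using mob_eqs(1)[of t c] that c by (simp add: divide_less_0_iff)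
    then show ?thesis using \<open>2*t \<noteq> c\<close> by auto
  qed
  have m2: "2*u\<noteq>c \<and> mob c u \<in> {2<..<c/2}" if "u \<in> {..<-2}" for u
  proof -
    have "2*u \<noteq> c" "2*u - c < 0" using that c by auto
    moreover have "(c - 4) * (u + 2) < 0" using that c by (intro mult_pos_neg) auto
    then have "mob c u - 2 > 0" "mob c u - c/2 < 0" using mob_eqs(2,3)[of u c] that c cc
      by (simp_all add: zero_less_divide_iff divide_less_0_iff)
    then show ?thesis using \<open>2*u \<noteq> c\<close> by auto
  qed
  have m3: "2*t\<noteq>c \<and> mob c t \<in> {c+2<..}" if "t \<in> {c/2<..<c-2}" for t
  proof -
    have "2*t \<noteq> c" "2*t - c > 0" using that by auto
    then have "mob c t - (c+2) > 0" using mob_eqs(4)[of t c] that c by (simp add: zero_less_divide_iff)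
    then show ?thesis using \<open>2*t \<noteq> c\<close> by auto
  qed
  have m4: "2*u\<noteq>c \<and> mob c u \<in> {c/2<..<c-2}" if "u \<in> {c+2<..}" for u
  proof -
    have "2*u \<noteq> c" "2*u - c > 0" using that c by auto
    moreover have "(c - 4) * (c + 2 - u) < 0" using that c by (intro mult_pos_neg) auto
    ultimately have "mob c u - c/2 > 0" "mob c u - (c-2) < 0" using mob_eqs(3,5)[of u c] that c cc
      by (simp_all add: zero_less_divide_iff divide_less_0_iff)
    then show ?thesis using \<open>2*u \<noteq> c\<close> by auto
  qed
  have mobFF: "\<bar>jac c t\<bar> * FF z c (mob c t) = FF z c t" if "2*t \<noteq> c" for t
    using mob_FF[OF that c] .
  have s1: "FF z c absolutely_integrable_on {..<-2} \<and> integral {..<-2} (FF z c) = integral {2<..<c/2} (FF z c)"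
    using cov[where S="{2<..<c/2}" and g="mob c" and g'="jac c" and T="{..<-2}" and f="FF z c" and F="FF z c"
        and v="integral {2<..<c/2} (FF z c)"]
      mob_img[of "{2<..<c/2}" c "{..<-2}", OF m1 m2 cc(1)] mob_deriv m1 mobFF base[OF z c]
    by auto
  have refl: "\<bar>-1\<bar> * FF z c (c - t) = FF z c t" for t
    unfolding FF_def EE_def by (simp add: algebra_simps power2_eq_square)
  have rimg: "(\<lambda>t. c - t) ` {c+2<..} = {..<-2}"
  proof
    show "(\<lambda>t. c - t) ` {c+2<..} \<subseteq> {..<-2}" by auto
    show "{..<-2} \<subseteq> (\<lambda>t. c - t) ` {c+2<..}"
    proof
      fix u :: real assume "u \<in> {..<-2}"
      then have "c - u \<in> {c+2<..}" "u = c - (c - u)" by auto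
      then show "u \<in> (\<lambda>t. c - t) ` {c+2<..}" by blast
    qed
  qed
  have rder: "((\<lambda>t. c - t) has_real_derivative -1) (at t)" for t
    by (auto intro!: derivative_eq_intros)
  have s2: "FF z c absolutely_integrable_on {c+2<..} \<and> integral {c+2<..} (FF z c) = I"
    using cov[where S="{c+2<..}" and g="\<lambda>t. c - t" and g'="\<lambda>t. -1" and T="{..<-2}" and f="FF z c" and F="FF z c"
        and v="I", OF _ rder _ rimg refl] s1 unfolding I_def
    by (auto simp: inj_on_def)
  have s3: "FF z c absolutely_integrable_on {c/2<..<c-2} \<and> integral {c/2<..<c-2} (FF z c) = I"
    using cov[where S="{c/2<..<c-2}" and g="mob c" and g'="jac c" and T="{c+2<..}" and f="FF z c" and F="FF z c"
        and v="I"]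
      mob_img[of "{c/2<..<c-2}" c "{c+2<..}", OF m3 m4 cc(1)] mob_deriv m3 mobFF s2
    by auto
  have u: "FF z c absolutely_integrable_on ({2<..<c/2} \<union> {c/2<..<c-2}) \<and>
      integral ({2<..<c/2} \<union> {c/2<..<c-2}) (FF z c) = integral {2<..<c/2} (FF z c) + integral {c/2<..<c-2} (FF z c)"
    by (rule union2) (use s1 s3 base[OF z c] in auto)
  have "FF z c absolutely_integrable_on {2<..<c-2} \<and> integral {2<..<c-2} (FF z c) = integral ({2<..<c/2} \<union> {c/2<..<c-2}) (FF z c)"
    by (rule spike_fin[where E="{c/2}"]) (use u c in auto)
  then show "FF z c absolutely_integrable_on {2<..<c-2} \<and> integral {2<..<c-2} (FF z c) = 2 * integral {..<-2} (FF z c)"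
    using u s1 s3 unfolding I_def by simp
  show "FF z c absolutely_integrable_on {..<-2}" using s1 by simp
  show "FF z c absolutely_integrable_on {c+2<..} \<and> integral {c+2<..} (FF z c) = integral {..<-2} (FF z c)"
    using s2 unfolding I_def .
qed

lemma g_inv:
  fixes t :: real
  assumes "t^2 \<ge> 4"
  shows "(t - sqrt(t^2-4))/2 \<noteq> 0" "(t - sqrt(t^2-4))/2 + 1/((t - sqrt(t^2-4))/2) = t"
    "(t + sqrt(t^2-4))/2 \<noteq> 0" "(t + sqrt(t^2-4))/2 + 1/((t + sqrt(t^2-4))/2) = t"
proof -
  define s where "s = sqrt(t^2-4)"
  have s2: "s^2 = t^2 - 4" using assms by (simp add: s_def)
  have p: "((t - s)/2) * ((t + s)/2) = 1" using s2 by (simp add: field_simps power2_eq_square)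
  then have a: "(t - s)/2 \<noteq> 0" "(t + s)/2 \<noteq> 0" by auto
  have h1: "1/((t - s)/2) = (t+s)/2" "1/((t + s)/2) = (t-s)/2" using p a by (auto simp: field_simps)
  show "(t - sqrt(t^2-4))/2 \<noteq> 0" "(t - sqrt(t^2-4))/2 + 1/((t - sqrt(t^2-4))/2) = t"
    "(t + sqrt(t^2-4))/2 \<noteq> 0" "(t + sqrt(t^2-4))/2 + 1/((t + sqrt(t^2-4))/2) = t"
    using a unfolding s_def[symmetric] h1 by (auto simp: field_simps)
qed

lemma g_m2: "x > 0 \<Longrightarrow> x + 1/x - 2 = (x-1)^2/x" "x \<noteq> 0 \<Longrightarrow> x + 1/x + 2 = (x+1)^2/(x::real)"
  by (auto simp: field_simps power2_eq_square)

lemma g_diff: "x \<noteq> 0 \<Longrightarrow> y \<noteq> 0 \<Longrightarrow> (y + 1/y) - (x + 1/x) = (y - x) * (x*y - 1)/(x*y)"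
  for x y :: real by (simp add: field_simps)

lemma g_dec: "0 < x \<Longrightarrow> x < y \<Longrightarrow> y \<le> 1 \<Longrightarrow> y + 1/y < x + 1/(x::real)"
proof -
  assume a: "0 < x" "x < y" "y \<le> 1"
  have "x*y \<le> x" using a by (intro mult_left_le) auto
  then have "x*y < 1" using a by linarith
  then have "(y - x) * (x*y - 1)/(x*y) < 0" using a by (intro divide_neg_pos mult_pos_neg) auto
  then show ?thesis using g_diff[of x y] a by simp
qed

lemma g_inc: "1 \<le> x \<Longrightarrow> x < y \<Longrightarrow> x + 1/x < y + 1/(y::real)"
proof -
  assume a: "1 \<le> x" "x < y"
  have "1*1 < x*y" using a by (intro mult_le_less_imp_less) auto
  then have "(y - x) * (x*y - 1)/(x*y) > 0" using a by (intro divide_pos_pos mult_pos_pos) auto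
  then show ?thesis using g_diff[of x y] a by simp
qed

lemma g_inj: "(\<And>x y. x \<in> S \<Longrightarrow> y \<in> S \<Longrightarrow> x \<noteq> 0 \<and> x*y \<noteq> 1) \<Longrightarrow> inj_on (\<lambda>x::real. x + 1/x) S"
proof (rule inj_onI)
  fix x y assume h: "\<And>x y. x \<in> S \<Longrightarrow> y \<in> S \<Longrightarrow> x \<noteq> 0 \<and> x*y \<noteq> 1" "x \<in> S" "y \<in> S" "x + 1/x = y + 1/y"
  then have "(y - x) * (x*y - 1)/(x*y) = 0" using g_diff[of x y] by auto
  then show "x = y" using h(1)[OF h(2,3)] h(1)[OF h(3,2)] by (auto simp: mult.commute)
qed

lemma g_deriv: "x \<noteq> 0 \<Longrightarrow> ((\<lambda>x::real. x + 1/x) has_real_derivative (1 - 1/x^2)) (at x)"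
  by (auto intro!: derivative_eq_intros simp: power2_eq_square field_simps)

lemma g_EE:
  assumes z: "z > 0" and x: "x \<noteq> 0"
  shows "EE z (1/z) (x + 1/x) = ((x^2-1)/x^2)^2 * dpoly z x"
  unfolding EE_def dpoly_def using z x
  by (simp add: field_simps) (simp add: algebra_simps power2_eq_square eval_nat_numeral)

lemma g_FF:
  assumes z: "z > 0" and x: "x \<noteq> 0" "x^2 \<noteq> 1"
  shows "\<bar>1 - 1/x^2\<bar> * FF z (1/z) (x + 1/x) = integrand z x"
proof -
  define k where "k = \<bar>x^2-1\<bar>/x^2"
  have k: "k > 0" using x by (auto simp: k_def)
  have "\<bar>1 - 1/x^2\<bar> = k" using x by (simp add: k_def field_simps abs_div)
  moreover have "((x^2-1)/x^2)^2 = k^2" by (simp add: k_def power_divide)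
  moreover have "sqrt (EE z (1/z) (x + 1/x)) = k * sqrt (dpoly z x)"
    unfolding g_EE[OF z x(1)] \<open>((x^2-1)/x^2)^2 = k^2\<close> using k by (simp add: real_sqrt_mult)
  ultimately show ?thesis unfolding FF_def integrand_def using k by simp
qed

lemma roots:
  fixes z :: real
  assumes z: "0 < z" "z < 1/4"
  shows "0 < root2 z" "root2 z < 1" "root2 z + 1/root2 z = 1/z - 2" "1 < root3 z"
    "root3 z + 1/root3 z = 1/z - 2" "0 < root1 z" "root1 z < 1" "root1 z + 1/root1 z = 1/z + 2"
proof -
  define s2 where "s2 = sqrt (1-4*z)"
  define s1 where "s1 = sqrt (1+4*z)"
  have s2sq: "s2^2 = 1 - 4*z" and s2p: "0 < s2" using z by (auto simp: s2_def)
  have s1sq: "s1^2 = 1 + 4*z" and s1p: "0 < s1" using z by (auto simp: s1_def)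
  have e2: "(1-2*z)^2 = 1 - 4*z + 4*z^2" by (simp add: power2_eq_square algebra_simps)
  have "s2^2 < (1-2*z)^2" unfolding e2 s2sq using z by simp
  then have s2a: "s2 < 1 - 2*z" by (rule power2_less_imp_less) (use z in simp)
  have "(1-4*z)*(1-4*z) < 1*(1-4*z)" using z by (intro mult_strict_right_mono) auto
  then have "(1-4*z)^2 < s2^2" unfolding s2sq by (simp add: power2_eq_square)
  then have s2b: "1 - 4*z < s2" by (rule power2_less_imp_less) (use s2p in simp)
  have e1: "(1+2*z)^2 = 1 + 4*z + 4*z^2" by (simp add: power2_eq_square algebra_simps)
  have "s1^2 < (1+2*z)^2" unfolding e1 s1sq using z by simp
  then have s1a: "s1 < 1 + 2*z" by (rule power2_less_imp_less) (use z in simp)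
  have "1^2 < s1^2" unfolding s1sq using z by simp
  then have s1b: "1 < s1" by (rule power2_less_imp_less) (use s1p in simp)
  have r2: "root2 z = (1-2*z-s2)/(2*z)" and r3: "root3 z = (1-2*z+s2)/(2*z)"
    and r1: "root1 z = (1+2*z-s1)/(2*z)" and r4: "root4 z = (1+2*z+s1)/(2*z)"
    by (simp_all add: root1_def root2_def root3_def root4_def s1_def s2_def)
  show p2: "0 < root2 z" unfolding r2 using z s2a by simp
  show "root2 z < 1" unfolding r2 using z s2b by (simp add: divide_less_eq)
  have prod23: "root2 z * root3 z = 1" unfolding r2 r3 using z s2sq
    by (simp add: field_simps) (simp add: algebra_simps power2_eq_square)
  have sum23: "root2 z + root3 z = 1/z - 2" unfolding r2 r3 using z by (simp add: field_simps)
  have i2: "1/root2 z = root3 z" using prod23 p2 by (simp add: field_simps)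
  show "root2 z + 1/root2 z = 1/z - 2" using i2 sum23 by simp
  have p3: "root3 z > 0" unfolding r3 using z s2p s2a by simp
  have i3: "1/root3 z = root2 z" using prod23 p3 by (simp add: field_simps)
  show "root3 z + 1/root3 z = 1/z - 2" using i3 sum23 by simp
  show "1 < root3 z" using i2 \<open>root2 z < 1\<close> p2 less_divide_eq_1_pos[of "root2 z" 1] by simp
  show p1: "0 < root1 z" unfolding r1 using z s1a by simp
  show "root1 z < 1" unfolding r1 using z s1b by (simp add: divide_less_eq)
  have prod14: "root1 z * root4 z = 1" unfolding r1 r4 using z s1sq
    by (simp add: field_simps) (simp add: algebra_simps power2_eq_square)
  have sum14: "root1 z + root4 z = 1/z + 2" unfolding r1 r4 using z by (simp add: field_simps)
  have "1/root1 z = root4 z" using prod14 p1 by (simp add: field_simps)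
  then show "root1 z + 1/root1 z = 1/z + 2" using sum14 by simp
qed

lemma xcov:
  assumes z: "(z::real) > 0" and S: "S \<in> sets lebesgue" and nz: "\<And>x. x \<in> S \<Longrightarrow> x \<noteq> 0 \<and> x^2 \<noteq> 1"
    and inj: "inj_on (\<lambda>x. x + 1/x) S" and img: "(\<lambda>x. x + 1/x) ` S = T"
    and F: "FF z (1/z) absolutely_integrable_on T"
  shows "integrand z absolutely_integrable_on S \<and> integral S (integrand z) = integral T (FF z (1/z))"
  using cov[where S=S and g="\<lambda>x. x + 1/x" and g'="\<lambda>x. 1 - 1/x^2" and T=T and F="FF z (1/z)"
      and f="integrand z" and v="integral T (FF z (1/z))", OF S _ inj img] g_deriv g_FF[OF z] nz F
  by auto

lemma prod_lt1: "0 < x \<Longrightarrow> x < 1 \<Longrightarrow> 0 < y \<Longrightarrow> y < 1 \<Longrightarrow> x*y \<noteq> (1::real)"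
proof -
  assume a: "0 < x" "x < 1" "0 < y" "y < 1"
  have "x*y < 1*1" using a by (intro mult_strict_mono) auto
  then show ?thesis by simp
qed

lemma prod_gt1: "1 < x \<Longrightarrow> 1 < y \<Longrightarrow> x*y \<noteq> (1::real)"
proof -
  assume a: "1 < x" "1 < y"
  have "1*1 < x*y" using a by (intro mult_strict_mono) auto
  then show ?thesis by simp
qed

lemma sq_ne1: "x \<noteq> 1 \<Longrightarrow> x \<noteq> -1 \<Longrightarrow> x^2 \<noteq> (1::real)"
  by (simp add: power2_eq_1_iff)

lemma inj01: "S \<subseteq> {0<..<1} \<Longrightarrow> inj_on (\<lambda>x::real. x + 1/x) S"
proof (rule g_inj)
  fix x y assume "S \<subseteq> {0<..<1}" "x \<in> S" "y \<in> S"
  then have "0 < x" "x < 1" "0 < y" "y < 1" by auto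
  then have "x*y \<noteq> 1" by (rule prod_lt1)
  then show "x \<noteq> 0 \<and> x*y \<noteq> 1" using \<open>0 < x\<close> by auto
qed
lemma inj1: "S \<subseteq> {1<..} \<Longrightarrow> inj_on (\<lambda>x::real. x + 1/x) S"
proof (rule g_inj)
  fix x y assume "S \<subseteq> {1<..}" "x \<in> S" "y \<in> S"
  then have "1 < x" "1 < y" by auto
  then have "x*y \<noteq> 1" by (rule prod_gt1)
  then show "x \<noteq> 0 \<and> x*y \<noteq> 1" using \<open>1 < x\<close> by auto
qed
lemma t4: "2 \<le> \<bar>t\<bar> \<Longrightarrow> 4 \<le> (t::real)^2"
proof -
  assume "2 \<le> \<bar>t\<bar>"
  then have "2^2 \<le> \<bar>t\<bar>^2" by (intro power_mono) auto
  then show ?thesis by simp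
qed
lemma injm1: "S \<subseteq> {..<-1} \<Longrightarrow> inj_on (\<lambda>x::real. x + 1/x) S"
proof (rule g_inj)
  fix x y assume "S \<subseteq> {..<-1}" "x \<in> S" "y \<in> S"
  then have "1 < -x" "1 < -y" by auto
  then have "(-x)*(-y) \<noteq> 1" by (rule prod_gt1)
  then show "x \<noteq> 0 \<and> x*y \<noteq> 1" using \<open>1 < -x\<close> by auto
qed
lemma injm10: "S \<subseteq> {-1<..<0} \<Longrightarrow> inj_on (\<lambda>x::real. x + 1/x) S"
proof (rule g_inj)
  fix x y assume "S \<subseteq> {-1<..<0}" "x \<in> S" "y \<in> S"
  then have "0 < -x" "-x < 1" "0 < -y" "-y < 1" by auto
  then have "(-x)*(-y) \<noteq> 1" by (rule prod_lt1)
  then show "x \<noteq> 0 \<and> x*y \<noteq> 1" using \<open>0 < -x\<close> by auto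
qed

theorem main:
  fixes z :: real
  assumes "0 < z" and "z < 1/4"
  shows "integrand z integrable_on {root2 z .. root3 z} \<and>
         integrand z integrable_on {.. root1 z} \<and>
         omega3 z = 3 * omega2 z / 4"
proof -
  have z: "z > 0" using assms by simp
  define c where "c = 1/z"
  have c4: "c > 4" using assms unfolding c_def by (simp add: field_simps)
  note R = roots[OF assms]
  define r1 where "r1 = root1 z"
  define r2 where "r2 = root2 z"
  define r3 where "r3 = root3 z"
  have R2: "0 < r2" "r2 < 1" "r2 + 1/r2 = c - 2" "1 < r3" "r3 + 1/r3 = c - 2" "0 < r1" "r1 < 1" "r1 + 1/r1 = c + 2"
    using R unfolding r1_def r2_def r3_def c_def by auto
  define F where "F = FF z c"
  define I where "I = integral {..<-2} F"
  note TC = tchain[OF z c4, folded F_def, folded I_def]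
  define g where "g = (\<lambda>x::real. x + 1/x)"
  have gi: "s^2 \<ge> 4 \<Longrightarrow> g ((s - sqrt(s^2-4))/2) = s" "s^2 \<ge> 4 \<Longrightarrow> g ((s + sqrt(s^2-4))/2) = s" for s
    using g_inv unfolding g_def by auto
  have im1: "g ` {r2<..<1} = {2<..<c-2}"
  proof
    show "g ` {r2<..<1} \<subseteq> {2<..<c-2}"
    proof
      fix t assume "t \<in> g ` {r2<..<1}"
      then obtain x where x: "r2 < x" "x < 1" "t = g x" by auto
      have "g x - 2 = (x-1)^2/x" using g_m2(1)[of x] x R2 unfolding g_def by simp
      moreover have "(x-1)^2/x > 0" using x R2 by simp
      ultimately have "2 < g x" by linarith
      moreover have "g x < g r2" using g_dec[of r2 x] x R2 unfolding g_def by simp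
      ultimately show "t \<in> {2<..<c-2}" using x R2 unfolding g_def by simp
    qed
    show "{2<..<c-2} \<subseteq> g ` {r2<..<1}"
    proof
      fix t assume t: "t \<in> {2<..<c-2}"
      define s where "s = sqrt (t^2-4)"
      define x where "x = (t - s)/2"
      have t4: "t^2 \<ge> 4" using t by (intro t4) auto
      have gx: "g x = t" unfolding x_def s_def using gi(1)[OF t4] .
      have "s < sqrt (t^2)" unfolding s_def by (rule real_sqrt_less_mono) simp
      then have "s < t" using t by simp
      then have x0: "0 < x" unfolding x_def by simp
      have "(t-2)^2 < t^2 - 4" using t by (simp add: power2_eq_square algebra_simps)
      then have "t - 2 < s" unfolding s_def by (rule real_less_rsqrt)
      then have x1: "x < 1" unfolding x_def by simp
      have "r2 < x"
      proof (rule ccontr)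
        assume "\<not> r2 < x"
        then have "x \<le> r2" by simp
        then have "g r2 \<le> g x" using g_dec[of x r2] x0 R2 unfolding g_def by (cases "x = r2") auto
        then show False using gx t R2 unfolding g_def by simp
      qed
      then show "t \<in> g ` {r2<..<1}" using x1 gx by force
    qed
  qed
  have p1: "integrand z absolutely_integrable_on {r2<..<1} \<and> integral {r2<..<1} (integrand z) = 2 * I"
  proof -
    have inj: "inj_on (\<lambda>x::real. x + 1/x) {r2<..<1}" by (rule inj01) (use R2 in auto)
    have nz: "\<And>x::real. x \<in> {r2<..<1} \<Longrightarrow> x \<noteq> 0 \<and> x^2 \<noteq> 1" using R2 by (auto simp: power2_eq_1_iff)
    show ?thesis using xcov[OF z _ nz inj im1[unfolded g_def], folded c_def F_def] TC(1) R2 by auto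
  qed
  have im2: "g ` {1<..<r3} = {2<..<c-2}"
  proof
    show "g ` {1<..<r3} \<subseteq> {2<..<c-2}"
    proof
      fix t assume "t \<in> g ` {1<..<r3}"
      then obtain x where x: "1 < x" "x < r3" "t = g x" by auto
      have "g x - 2 = (x-1)^2/x" using g_m2(1)[of x] x unfolding g_def by simp
      moreover have "(x-1)^2/x > 0" using x by simp
      ultimately have "2 < g x" by linarith
      moreover have "g x < g r3" using g_inc[of x r3] x unfolding g_def by simp
      ultimately show "t \<in> {2<..<c-2}" using x R2 unfolding g_def by simp
    qed
    show "{2<..<c-2} \<subseteq> g ` {1<..<r3}"
    proof
      fix t assume t: "t \<in> {2<..<c-2}"
      define s where "s = sqrt (t^2-4)"
      define x where "x = (t + s)/2"
      have t4: "t^2 \<ge> 4" using t by (intro t4) auto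
      have gx: "g x = t" unfolding x_def s_def using gi(2)[OF t4] .
      have "s \<ge> 0" unfolding s_def using t4 by simp
      then have x1: "1 < x" unfolding x_def using t by simp
      have "x < r3"
      proof (rule ccontr)
        assume "\<not> x < r3"
        then have "r3 \<le> x" by simp
        then have "g r3 \<le> g x" using g_inc[of r3 x] R2 unfolding g_def by (cases "x = r3") auto
        then show False using gx t R2 unfolding g_def by simp
      qed
      then show "t \<in> g ` {1<..<r3}" using x1 gx by force
    qed
  qed
  have p2: "integrand z absolutely_integrable_on {1<..<r3} \<and> integral {1<..<r3} (integrand z) = 2 * I"
  proof -
    have inj: "inj_on (\<lambda>x::real. x + 1/x) {1<..<r3}" by (rule inj1) (use R2 in auto)
    have nz: "\<And>x::real. x \<in> {1<..<r3} \<Longrightarrow> x \<noteq> 0 \<and> x^2 \<noteq> 1" using R2 by (auto simp: power2_eq_1_iff)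
    show ?thesis using xcov[OF z _ nz inj im2[unfolded g_def], folded c_def F_def] TC(1) R2 by auto
  qed
  have im3: "g ` {..<-1} = {..<-2}"
  proof
    show "g ` {..<-1} \<subseteq> {..<-2}"
    proof
      fix t assume "t \<in> g ` {..<-1}"
      then obtain x where x: "x < -1" "t = g x" by auto
      have "g x + 2 = (x+1)^2/x" using g_m2(2)[of x] x unfolding g_def by simp
      moreover have "(x+1)^2/x < 0" using x by (simp add: divide_less_0_iff)
      ultimately have "g x < -2" by linarith
      then show "t \<in> {..<-2}" using x by simp
    qed
    show "{..<-2} \<subseteq> g ` {..<-1}"
    proof
      fix t :: real assume t: "t \<in> {..<-2}"
      define s where "s = sqrt (t^2-4)"
      define x where "x = (t - s)/2"
      have t4: "t^2 \<ge> 4" using t by (intro t4) auto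
      have gx: "g x = t" unfolding x_def s_def using gi(1)[OF t4] .
      have "s \<ge> 0" unfolding s_def using t4 by simp
      then have "x < -1" unfolding x_def using t by simp
      then show "t \<in> g ` {..<-1}" using gx by force
    qed
  qed
  have p3: "integrand z absolutely_integrable_on {..<-1} \<and> integral {..<-1} (integrand z) = I"
  proof -
    have inj: "inj_on (\<lambda>x::real. x + 1/x) {..<-1}" using injm1[of "{..<-1}"] by simp
    have nz: "\<And>x::real. x \<in> {..<-1} \<Longrightarrow> x \<noteq> 0 \<and> x^2 \<noteq> 1" using R2 by (auto simp: power2_eq_1_iff)
    show ?thesis using xcov[OF z _ nz inj im3[unfolded g_def], folded c_def F_def] TC(2) unfolding I_def by auto
  qed
  have im4: "g ` {-1<..<0} = {..<-2}"
  proof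
    show "g ` {-1<..<0} \<subseteq> {..<-2}"
    proof
      fix t assume "t \<in> g ` {-1<..<0}"
      then obtain x where x: "-1 < x" "x < 0" "t = g x" by auto
      have "g x + 2 = (x+1)^2/x" using g_m2(2)[of x] x unfolding g_def by simp
      moreover have "(x+1)^2/x < 0" using x by (simp add: divide_less_0_iff)
      ultimately have "g x < -2" by linarith
      then show "t \<in> {..<-2}" using x by simp
    qed
    show "{..<-2} \<subseteq> g ` {-1<..<0}"
    proof
      fix t :: real assume t: "t \<in> {..<-2}"
      define s where "s = sqrt (t^2-4)"
      define x where "x = (t + s)/2"
      have t4: "t^2 \<ge> 4" using t by (intro t4) auto
      have gx: "g x = t" unfolding x_def s_def using gi(2)[OF t4] .
      have "s < sqrt (t^2)" unfolding s_def by (rule real_sqrt_less_mono) simp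
      then have "s < -t" using t by simp
      then have x0: "x < 0" unfolding x_def by simp
      have "(-2-t)^2 < t^2 - 4" using t by (simp add: power2_eq_square algebra_simps)
      then have "-2-t < s" unfolding s_def by (rule real_less_rsqrt)
      then have "-1 < x" unfolding x_def by simp
      then show "t \<in> g ` {-1<..<0}" using x0 gx by force
    qed
  qed
  have p4: "integrand z absolutely_integrable_on {-1<..<0} \<and> integral {-1<..<0} (integrand z) = I"
  proof -
    have inj: "inj_on (\<lambda>x::real. x + 1/x) {-1<..<0}" by (rule injm10) (use R2 in auto)
    have nz: "\<And>x::real. x \<in> {-1<..<0} \<Longrightarrow> x \<noteq> 0 \<and> x^2 \<noteq> 1" using R2 by (auto simp: power2_eq_1_iff)
    show ?thesis using xcov[OF z _ nz inj im4[unfolded g_def], folded c_def F_def] TC(2) unfolding I_def by auto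
  qed
  have im5: "g ` {0<..<r1} = {c+2<..}"
  proof
    show "g ` {0<..<r1} \<subseteq> {c+2<..}"
    proof
      fix t assume "t \<in> g ` {0<..<r1}"
      then obtain x where x: "0 < x" "x < r1" "t = g x" by auto
      have "g r1 < g x" using g_dec[of x r1] x R2 unfolding g_def by simp
      then show "t \<in> {c+2<..}" using x R2 unfolding g_def by simp
    qed
    show "{c+2<..} \<subseteq> g ` {0<..<r1}"
    proof
      fix t assume t: "t \<in> {c+2<..}"
      then have t2: "t > 2" using c4 by simp
      define s where "s = sqrt (t^2-4)"
      define x where "x = (t - s)/2"
      have t4: "t^2 \<ge> 4" using t2 by (intro t4) auto
      have gx: "g x = t" unfolding x_def s_def using gi(1)[OF t4] .
      have "s < sqrt (t^2)" unfolding s_def by (rule real_sqrt_less_mono) simp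
      then have "s < t" using t2 by simp
      then have x0: "0 < x" unfolding x_def by simp
      have "x < r1"
      proof (rule ccontr)
        assume "\<not> x < r1"
        then have "r1 \<le> x" by simp
        moreover have "(t-2)^2 < t^2 - 4" using t2 by (simp add: power2_eq_square algebra_simps)
        then have "t - 2 < s" unfolding s_def by (rule real_less_rsqrt)
        then have x1: "x < 1" unfolding x_def by simp
        ultimately have "g x \<le> g r1" using g_dec[of r1 x] R2 unfolding g_def by (cases "x = r1") auto
        then show False using gx t R2 unfolding g_def by simp
      qed
      then show "t \<in> g ` {0<..<r1}" using x0 gx by force
    qed
  qed
  have p5: "integrand z absolutely_integrable_on {0<..<r1} \<and> integral {0<..<r1} (integrand z) = I"
  proof -
    have inj: "inj_on (\<lambda>x::real. x + 1/x) {0<..<r1}" by (rule inj01) (use R2 in auto)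
    have nz: "\<And>x::real. x \<in> {0<..<r1} \<Longrightarrow> x \<noteq> 0 \<and> x^2 \<noteq> 1" using R2 by (auto simp: power2_eq_1_iff)
    show ?thesis using xcov[OF z _ nz inj im5[unfolded g_def], folded c_def F_def] TC(3) R2 by auto
  qed
  have u2: "integrand z absolutely_integrable_on ({r2<..<1} \<union> {1<..<r3}) \<and>
     integral ({r2<..<1} \<union> {1<..<r3}) (integrand z) = 2*I + 2*I"
    using union2[where f="integrand z" and A="{r2<..<1}" and B="{1<..<r3}"] p1 p2 by auto
  have w2: "integrand z absolutely_integrable_on {r2..r3} \<and> integral {r2..r3} (integrand z) = 4*I"
    using spike_fin[where f="integrand z" and S="{r2<..<1} \<union> {1<..<r3}" and E="{r2,1,r3}" and T="{r2..r3}"] u2 R2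
    by force
  have u31: "integrand z absolutely_integrable_on ({..<-1} \<union> {-1<..<0}) \<and>
     integral ({..<-1} \<union> {-1<..<0}) (integrand z) = I + I"
  proof -
    have d: "{..<-1::real} \<inter> {-1<..<0} = {}" by auto
    show ?thesis using union2[OF conjunct1[OF p3] conjunct1[OF p4] d] p3 p4 by simp
  qed
  have u32: "integrand z absolutely_integrable_on (({..<-1} \<union> {-1<..<0}) \<union> {0<..<r1}) \<and>
     integral (({..<-1} \<union> {-1<..<0}) \<union> {0<..<r1}) (integrand z) = I + I + I"
  proof -
    have d: "({..<-1::real} \<union> {-1<..<0}) \<inter> {0<..<r1} = {}" by auto
    show ?thesis using union2[OF conjunct1[OF u31] conjunct1[OF p5] d] u31 p5 by simp
  qed
  have w3: "integrand z absolutely_integrable_on {..r1} \<and> integral {..r1} (integrand z) = 3*I"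
    using spike_fin[where f="integrand z" and S="({..<-1} \<union> {-1<..<0}) \<union> {0<..<r1}" and E="{-1,0,r1}" and T="{..r1}"] u32 R2
    by force
  show ?thesis
    using w2 w3 unfolding omega2_def omega3_def r1_def r2_def r3_def absolutely_integrable_on_def
    by simp
qed

theorem proposition14:
  fixes z :: real
  assumes "0 < z" and "z < 1/4"
  shows "integrand z integrable_on {root2 z .. root3 z} \<and>
         integrand z integrable_on {.. root1 z} \<and>
         omega3 z = 3 * omega2 z / 4"
  using main[OF assms] .

end
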